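(* Let $a\in K$ and let $b_1,\dots,b_\ell\notin K$ be distinct ($\ell\ge 1$). Suppose that either $(a,b_i)\in T$ for all $i$, or there are $a_1,\dots,a_\ell\in K$ with $(a_i,b_i)\in T$ and $a_i\circ b_i=a$ for all $i$. Then $\pi\ge\ell(n-2q-m+1)+q-m-1$.
   Context: $G$ is a set of size $n$ and $G(\circ)$, $G(\ast)$ are distinct groups on $G$ with the same identity element. $\mathrm{diff}(\circ,\ast)=\{(a,b):a\circ b\ne a\ast b\}$, $\mathrm{dist}(\circ,\ast)=|\mathrm{diff}(\circ,\ast)|$, $\mathrm{dist}_a=|\{b:a\circ b\ne a\ast b\}|$; $H=\{a:\mathrm{dist}_a=0\}$, $h=|H|$; $K=\{a:\mathrm{dist}_a<n/3\}$, $k=|K|$; $m=\min\{\mathrm{dist}_a:\mathrm{dist}_a>0\}$. Standing assumption: $m\ge 3$. Let $q=\lceil n/3\rceil$ and the profit $\pi=\mathrm{dist}(\circ,\ast)-((k-h)m+(n-k)q)$. Let $T=\{(a,b)\in\mathrm{diff}(\circ,\ast):a\in K,\ a\circ b\in K\}$. *)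

theory Defs
  imports Complex_Main "HOL-Algebra.Group"
begin

text \<open>Two group structures G1 (operation circ) and G2 (operation ast) on the same carrier.\<close>

definition diffset :: "('a, 'b) monoid_scheme \<Rightarrow> ('a, 'c) monoid_scheme \<Rightarrow> ('a \<times> 'a) set" where
  "diffset G1 G2 = {(a, b). a \<in> carrier G1 \<and> b \<in> carrier G1 \<and> a \<otimes>\<^bsub>G1\<^esub> b \<noteq> a \<otimes>\<^bsub>G2\<^esub> b}"

definition distance :: "('a, 'b) monoid_scheme \<Rightarrow> ('a, 'c) monoid_scheme \<Rightarrow> nat" where
  "distance G1 G2 = card (diffset G1 G2)"

definition dist_at :: "('a, 'b) monoid_scheme \<Rightarrow> ('a, 'c) monoid_scheme \<Rightarrow> 'a \<Rightarrow> nat" where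
  "dist_at G1 G2 a = card {b \<in> carrier G1. a \<otimes>\<^bsub>G1\<^esub> b \<noteq> a \<otimes>\<^bsub>G2\<^esub> b}"

definition Hset :: "('a, 'b) monoid_scheme \<Rightarrow> ('a, 'c) monoid_scheme \<Rightarrow> 'a set" where
  "Hset G1 G2 = {a \<in> carrier G1. dist_at G1 G2 a = 0}"

definition Kset :: "('a, 'b) monoid_scheme \<Rightarrow> ('a, 'c) monoid_scheme \<Rightarrow> 'a set" where
  "Kset G1 G2 = {a \<in> carrier G1. real (dist_at G1 G2 a) < real (card (carrier G1)) / 3}"

definition mmin :: "('a, 'b) monoid_scheme \<Rightarrow> ('a, 'c) monoid_scheme \<Rightarrow> nat" where
  "mmin G1 G2 = Min {dist_at G1 G2 a | a. a \<in> carrier G1 \<and> dist_at G1 G2 a > 0}"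

definition qval :: "('a, 'b) monoid_scheme \<Rightarrow> nat" where
  "qval G1 = nat \<lceil>real (card (carrier G1)) / 3\<rceil>"

definition profit :: "('a, 'b) monoid_scheme \<Rightarrow> ('a, 'c) monoid_scheme \<Rightarrow> int" where
  "profit G1 G2 = int (distance G1 G2)
     - ((int (card (Kset G1 G2)) - int (card (Hset G1 G2))) * int (mmin G1 G2)
        + (int (card (carrier G1)) - int (card (Kset G1 G2))) * int (qval G1))"

definition Tset :: "('a, 'b) monoid_scheme \<Rightarrow> ('a, 'c) monoid_scheme \<Rightarrow> ('a \<times> 'a) set" where
  "Tset G1 G2 = {(a, b) \<in> diffset G1 G2. a \<in> Kset G1 G2 \<and> a \<otimes>\<^bsub>G1\<^esub> b \<in> Kset G1 G2}"

end

theory Submission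
  imports Defs
begin

lemma grp_lcancel:
  assumes "group G" "x \<in> carrier G" "y \<in> carrier G" "z \<in> carrier G"
  shows "(x \<otimes>\<^bsub>G\<^esub> y = x \<otimes>\<^bsub>G\<^esub> z) = (y = z)"
  using assms by (metis group.Units_eq monoid.Units_l_cancel group.is_monoid)

lemma key3:
  fixes G1 G2 :: "'a monoid"
  assumes g1: "group G1" and g2: "group G2" and ceq: "carrier G1 = carrier G2"
    and fin: "finite (carrier G1)"
    and x: "x \<in> carrier G1" and y: "y \<in> carrier G1"
    and ne: "x \<otimes>\<^bsub>G1\<^esub> y \<noteq> x \<otimes>\<^bsub>G2\<^esub> y"
  shows "card (carrier G1) \<le> dist_at G1 G2 x + dist_at G1 G2 y + dist_at G1 G2 (x \<otimes>\<^bsub>G1\<^esub> y)"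
proof -
  let ?G = "carrier G1"
  define A where "A = {u \<in> ?G. y \<otimes>\<^bsub>G1\<^esub> u \<noteq> y \<otimes>\<^bsub>G2\<^esub> u}"
  define B where "B = {u \<in> ?G. x \<otimes>\<^bsub>G1\<^esub> (y \<otimes>\<^bsub>G1\<^esub> u) \<noteq> x \<otimes>\<^bsub>G2\<^esub> (y \<otimes>\<^bsub>G1\<^esub> u)}"
  define C where "C = {u \<in> ?G. (x \<otimes>\<^bsub>G1\<^esub> y) \<otimes>\<^bsub>G1\<^esub> u \<noteq> (x \<otimes>\<^bsub>G1\<^esub> y) \<otimes>\<^bsub>G2\<^esub> u}"
  define D where "D = {u \<in> ?G. x \<otimes>\<^bsub>G1\<^esub> u \<noteq> x \<otimes>\<^bsub>G2\<^esub> u}"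
  have m1: "monoid G1" using g1 by (rule group.is_monoid)
  have m2: "monoid G2" using g2 by (rule group.is_monoid)
  have xy: "x \<otimes>\<^bsub>G1\<^esub> y \<in> ?G" using m1 x y by (simp add: monoid.m_closed)
  have cov: "?G \<subseteq> A \<union> B \<union> C"
  proof
    fix u assume u: "u \<in> ?G"
    show "u \<in> A \<union> B \<union> C"
    proof (rule ccontr)
      assume "u \<notin> A \<union> B \<union> C"
      hence e1: "y \<otimes>\<^bsub>G1\<^esub> u = y \<otimes>\<^bsub>G2\<^esub> u"
        and e2: "x \<otimes>\<^bsub>G1\<^esub> (y \<otimes>\<^bsub>G1\<^esub> u) = x \<otimes>\<^bsub>G2\<^esub> (y \<otimes>\<^bsub>G1\<^esub> u)"
        and e3: "(x \<otimes>\<^bsub>G1\<^esub> y) \<otimes>\<^bsub>G1\<^esub> u = (x \<otimes>\<^bsub>G1\<^esub> y) \<otimes>\<^bsub>G2\<^esub> u"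
        using u by (auto simp: A_def B_def C_def)
      have "(x \<otimes>\<^bsub>G2\<^esub> y) \<otimes>\<^bsub>G2\<^esub> u = x \<otimes>\<^bsub>G2\<^esub> (y \<otimes>\<^bsub>G2\<^esub> u)"
        using monoid.m_assoc[OF m2] x y u ceq by auto
      also have "\<dots> = x \<otimes>\<^bsub>G2\<^esub> (y \<otimes>\<^bsub>G1\<^esub> u)" using e1 by simp
      also have "\<dots> = x \<otimes>\<^bsub>G1\<^esub> (y \<otimes>\<^bsub>G1\<^esub> u)" using e2 by simp
      also have "\<dots> = (x \<otimes>\<^bsub>G1\<^esub> y) \<otimes>\<^bsub>G1\<^esub> u" using monoid.m_assoc[OF m1] x y u by auto
      also have "\<dots> = (x \<otimes>\<^bsub>G1\<^esub> y) \<otimes>\<^bsub>G2\<^esub> u" using e3 .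
      finally have "x \<otimes>\<^bsub>G2\<^esub> y = x \<otimes>\<^bsub>G1\<^esub> y"
        using group.right_cancel[OF g2] x y u xy ceq monoid.m_closed[OF m2] by auto
      with ne show False by simp
    qed
  qed
  have finA: "finite A" "finite B" "finite C" using fin by (auto simp: A_def B_def C_def)
  have "card ?G \<le> card (A \<union> B \<union> C)" using cov finA by (intro card_mono) auto
  also have "\<dots> \<le> card (A \<union> B) + card C" by (rule card_Un_le)
  also have "\<dots> \<le> card A + card B + card C" using card_Un_le[of A B] by simp
  also have "card B = card D"
  proof -
    have inj: "inj_on (\<lambda>u. y \<otimes>\<^bsub>G1\<^esub> u) B"
      by (rule inj_onI) (use grp_lcancel[OF g1] y in \<open>auto simp: B_def\<close>)
    have "(\<lambda>u. y \<otimes>\<^bsub>G1\<^esub> u) ` B = D"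
    proof
      show "(\<lambda>u. y \<otimes>\<^bsub>G1\<^esub> u) ` B \<subseteq> D"
        using y by (auto simp: B_def D_def monoid.m_closed[OF m1])
      show "D \<subseteq> (\<lambda>u. y \<otimes>\<^bsub>G1\<^esub> u) ` B"
      proof
        fix v assume v: "v \<in> D"
        hence vG: "v \<in> ?G" by (simp add: D_def)
        let ?u = "inv\<^bsub>G1\<^esub> y \<otimes>\<^bsub>G1\<^esub> v"
        have uG: "?u \<in> ?G" using g1 y vG by (simp add: group.inv_closed monoid.m_closed[OF m1])
        have "y \<otimes>\<^bsub>G1\<^esub> ?u = v"
          using group.inv_solve_left[OF g1 uG y vG] by simp
        thus "v \<in> (\<lambda>u. y \<otimes>\<^bsub>G1\<^esub> u) ` B" using v uG
          by (auto simp: B_def D_def intro!: image_eqI[where x="?u"])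
      qed
    qed
    thus ?thesis using card_image[OF inj] by simp
  qed
  finally show ?thesis by (simp add: dist_at_def A_def C_def D_def)
qed

theorem lemma9p7:
  fixes G1 G2 :: "'a monoid" and a :: 'a and b c :: "nat \<Rightarrow> 'a" and l :: nat
  assumes "group G1" and "group G2"
    and "carrier G1 = carrier G2" and "finite (carrier G1)"
    and "\<one>\<^bsub>G1\<^esub> = \<one>\<^bsub>G2\<^esub>"
    and "\<exists>x\<in>carrier G1. \<exists>y\<in>carrier G1. x \<otimes>\<^bsub>G1\<^esub> y \<noteq> x \<otimes>\<^bsub>G2\<^esub> y"
    and "mmin G1 G2 \<ge> 3"
    and "l \<ge> 1"
    and "a \<in> Kset G1 G2"
    and "\<forall>i\<in>{1..l}. b i \<in> carrier G1 \<and> b i \<notin> Kset G1 G2"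
    and "inj_on b {1..l}"
    and "(\<forall>i\<in>{1..l}. (a, b i) \<in> Tset G1 G2) \<or>
         (\<exists>c. \<forall>i\<in>{1..l}. c i \<in> Kset G1 G2 \<and> (c i, b i) \<in> Tset G1 G2 \<and> c i \<otimes>\<^bsub>G1\<^esub> b i = a)"
  shows "profit G1 G2 \<ge> int l * (int (card (carrier G1)) - 2 * int (qval G1) - int (mmin G1 G2) + 1)
                         + int (qval G1) - int (mmin G1 G2) - 1"
proof -
  note g1 = assms(1) and g2 = assms(2) and ceq = assms(3) and fin = assms(4) and one = assms(5)
  note lge = assms(8) and aK = assms(9) and bprop = assms(10) and binj = assms(11) and cases = assms(12)
  let ?G = "carrier G1"
  let ?I = "{1..l::nat}"
  define d where "d = dist_at G1 G2"
  define K where "K = Kset G1 G2"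
  define H where "H = Hset G1 G2"
  define m where "m = mmin G1 G2"
  define q where "q = qval G1"
  define n where "n = card ?G"
  define w where "w x = (if x \<in> H then 0 else if x \<in> K then int (d x) - int m else int (d x) - int q)" for x
  have m1: "monoid G1" using g1 by (rule group.is_monoid)
  have oneG: "\<one>\<^bsub>G1\<^esub> \<in> ?G" using m1 by (rule monoid.one_closed)
  have npos: "n > 0" using fin oneG by (auto simp: n_def card_gt_0_iff)
  have KG: "K \<subseteq> ?G" by (auto simp: K_def Kset_def)
  have HG: "H \<subseteq> ?G" by (auto simp: H_def Hset_def)
  have HK: "H \<subseteq> K" using npos by (auto simp: H_def Hset_def K_def Kset_def n_def)
  have finK: "finite K" "finite H" using KG HG fin finite_subset by auto
  have dH: "x \<in> H \<Longrightarrow> d x = 0" for x by (simp add: H_def Hset_def d_def)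
  have qge: "real q \<ge> real n / 3" unfolding q_def qval_def n_def by linarith
  have notK: "x \<in> ?G \<Longrightarrow> x \<notin> K \<Longrightarrow> d x \<ge> q" for x
  proof -
    assume "x \<in> ?G" "x \<notin> K"
    hence "real n / 3 \<le> real (d x)" by (simp add: K_def Kset_def d_def n_def)
    hence "\<lceil>real n / 3\<rceil> \<le> int (d x)" by (simp add: ceiling_le_iff)
    thus "d x \<ge> q" unfolding q_def qval_def n_def by linarith
  qed
  have inK: "x \<in> K \<Longrightarrow> d x < q" for x
  proof -
    assume "x \<in> K"
    hence "real (d x) < real n / 3" by (simp add: K_def Kset_def d_def n_def)
    with qge show "d x < q" by linarith
  qed
  have mle: "x \<in> ?G \<Longrightarrow> d x > 0 \<Longrightarrow> m \<le> d x" for x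
  proof -
    assume "x \<in> ?G" "d x > 0"
    moreover have "finite {dist_at G1 G2 a | a. a \<in> carrier G1 \<and> dist_at G1 G2 a > 0}"
      using fin by (rule finite_subset[rotated, OF finite_imageI[of _ "dist_at G1 G2"]]) auto
    ultimately show "m \<le> d x" unfolding m_def mmin_def d_def by (intro Min_le) auto
  qed
  have wnn: "x \<in> ?G \<Longrightarrow> w x \<ge> 0" for x
    using mle[of x] notK[of x] dH[of x] by (auto simp: w_def H_def Hset_def d_def)
  have wK: "x \<in> K \<Longrightarrow> int (d x) \<le> int m + w x" for x
    using dH[of x] by (auto simp: w_def)
  have dist_sum: "distance G1 G2 = (\<Sum>x\<in>?G. d x)"
  proof -
    have "diffset G1 G2 = Sigma ?G (\<lambda>x. {y \<in> ?G. x \<otimes>\<^bsub>G1\<^esub> y \<noteq> x \<otimes>\<^bsub>G2\<^esub> y})"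
      by (auto simp: diffset_def)
    thus ?thesis using fin by (simp add: distance_def d_def dist_at_def)
  qed
  define r where "r x = (if x \<in> H then 0 else if x \<in> K then int m else int q)" for x
  have dwr: "x \<in> ?G \<Longrightarrow> int (d x) = w x + r x" for x using dH[of x] by (auto simp: w_def r_def)
  have rsum: "(\<Sum>x\<in>?G. r x) = int m * int (card (K - H)) + int q * int (card (?G - K))"
  proof -
    have "(\<Sum>x\<in>?G. r x) = (\<Sum>x\<in>?G - K. r x) + (\<Sum>x\<in>K. r x)"
      using KG fin by (rule sum.subset_diff)
    also have "(\<Sum>x\<in>?G - K. r x) = (\<Sum>x\<in>?G - K. int q)" by (rule sum.cong) (auto simp: r_def HK[THEN subsetD])
    also have "(\<Sum>x\<in>K. r x) = (\<Sum>x\<in>K - H. r x) + (\<Sum>x\<in>H. r x)"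
      using HK finK by (intro sum.subset_diff) auto
    also have "(\<Sum>x\<in>K - H. r x) = (\<Sum>x\<in>K - H. int m)" by (rule sum.cong) (auto simp: r_def)
    also have "(\<Sum>x\<in>H. r x) = 0" by (simp add: r_def)
    finally show ?thesis by (simp add: mult.commute)
  qed
  have cKH: "int (card (K - H)) = int (card K) - int (card H)"
    using HK finK by (simp add: card_Diff_subset card_mono of_nat_diff)
  have cGK: "int (card (?G - K)) = int n - int (card K)"
    using card_Diff_subset[OF finite_subset[OF KG fin] KG] card_mono[OF fin KG] by (simp add: of_nat_diff n_def)
  have profit_eq: "profit G1 G2 = (\<Sum>x\<in>?G. w x)"
  proof -
    have "int (distance G1 G2) = (\<Sum>x\<in>?G. w x) + (\<Sum>x\<in>?G. r x)"
      using dist_sum dwr by (simp add: sum.distrib[symmetric])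
    hence "int (distance G1 G2) = (\<Sum>x\<in>?G. w x) + ((int (card K) - int (card H)) * int m + (int n - int (card K)) * int q)"
      using rsum cKH cGK by (simp add: mult.commute)
    thus ?thesis unfolding profit_def K_def H_def m_def q_def n_def by linarith
  qed
  have oneK: "\<one>\<^bsub>G1\<^esub> \<in> K"
  proof -
    have "{u \<in> ?G. \<one>\<^bsub>G1\<^esub> \<otimes>\<^bsub>G1\<^esub> u \<noteq> \<one>\<^bsub>G1\<^esub> \<otimes>\<^bsub>G2\<^esub> u} = {}"
      using monoid.l_one[OF m1] monoid.l_one[OF group.is_monoid[OF g2]] ceq one by auto
    hence "d \<one>\<^bsub>G1\<^esub> = 0" unfolding d_def dist_at_def by (metis card.empty)
    thus ?thesis using npos oneG by (simp add: K_def Kset_def d_def n_def)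
  qed
  have bG: "i \<in> ?I \<Longrightarrow> b i \<in> ?G" and bK: "i \<in> ?I \<Longrightarrow> b i \<notin> K" for i
    using bprop by (auto simp: K_def)
  have bne1: "i \<in> ?I \<Longrightarrow> b i \<noteq> \<one>\<^bsub>G1\<^esub>" for i using bK[of i] oneK by auto
  have dpos: "x \<in> ?G \<Longrightarrow> y \<in> ?G \<Longrightarrow> x \<otimes>\<^bsub>G1\<^esub> y \<noteq> x \<otimes>\<^bsub>G2\<^esub> y \<Longrightarrow> d x > 0" for x y
  proof -
    assume "x \<in> ?G" "y \<in> ?G" "x \<otimes>\<^bsub>G1\<^esub> y \<noteq> x \<otimes>\<^bsub>G2\<^esub> y"
    hence "y \<in> {u \<in> ?G. x \<otimes>\<^bsub>G1\<^esub> u \<noteq> x \<otimes>\<^bsub>G2\<^esub> u}" by simp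
    moreover have "finite {u \<in> ?G. x \<otimes>\<^bsub>G1\<^esub> u \<noteq> x \<otimes>\<^bsub>G2\<^esub> u}" using fin by simp
    ultimately show ?thesis unfolding d_def dist_at_def by (auto simp: card_gt_0_iff)
  qed
  have l1: "1 \<in> ?I" using lge by simp
  obtain c' where c'K: "\<forall>i\<in>?I. c' i \<in> K \<and> c' i \<noteq> a" and c'inj: "inj_on c' ?I"
    and c'key: "\<forall>i\<in>?I. n \<le> d a + d (c' i) + d (b i)" and zex: "\<exists>z\<in>K. d z > 0"
  proof (cases "\<forall>i\<in>?I. (a, b i) \<in> Tset G1 G2")
    case True
    have aG: "a \<in> ?G" using aK KG by (auto simp: K_def)
    have T: "i \<in> ?I \<Longrightarrow> a \<otimes>\<^bsub>G1\<^esub> b i \<in> K \<and> a \<otimes>\<^bsub>G1\<^esub> b i \<noteq> a \<otimes>\<^bsub>G2\<^esub> b i" for i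
    proof -
      assume i: "i \<in> ?I"
      hence "(a, b i) \<in> Tset G1 G2" using True by blast
      thus ?thesis unfolding Tset_def diffset_def K_def by blast
    qed
    show ?thesis
    proof (rule that[of "\<lambda>i. a \<otimes>\<^bsub>G1\<^esub> b i"])
      show "\<forall>i\<in>?I. a \<otimes>\<^bsub>G1\<^esub> b i \<in> K \<and> a \<otimes>\<^bsub>G1\<^esub> b i \<noteq> a"
      proof
        fix i assume i: "i \<in> ?I"
        have "a \<otimes>\<^bsub>G1\<^esub> b i \<noteq> a"
          using group.l_cancel_one[OF g1 aG bG[OF i]] bne1[OF i] by blast
        thus "a \<otimes>\<^bsub>G1\<^esub> b i \<in> K \<and> a \<otimes>\<^bsub>G1\<^esub> b i \<noteq> a" using T[OF i] by blast
      qed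
      show "inj_on (\<lambda>i. a \<otimes>\<^bsub>G1\<^esub> b i) ?I"
      proof (rule inj_onI)
        fix i j assume ij: "i \<in> ?I" "j \<in> ?I" "a \<otimes>\<^bsub>G1\<^esub> b i = a \<otimes>\<^bsub>G1\<^esub> b j"
        hence "b i = b j" using grp_lcancel[OF g1 aG bG[OF ij(1)] bG[OF ij(2)]] by blast
        thus "i = j" using inj_onD[OF binj _ ij(1,2)] by blast
      qed
      show "\<forall>i\<in>?I. n \<le> d a + d (a \<otimes>\<^bsub>G1\<^esub> b i) + d (b i)"
      proof
        fix i assume i: "i \<in> ?I"
        have "n \<le> d a + d (b i) + d (a \<otimes>\<^bsub>G1\<^esub> b i)"
          unfolding n_def d_def using key3[OF g1 g2 ceq fin aG bG[OF i]] T[OF i] by blast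
        thus "n \<le> d a + d (a \<otimes>\<^bsub>G1\<^esub> b i) + d (b i)" by linarith
      qed
      have "d a > 0" using dpos[OF aG bG[OF l1]] T[OF l1] by blast
      thus "\<exists>z\<in>K. d z > 0" using aK unfolding K_def by blast
    qed
  next
    case False
    with cases obtain c where cc: "\<forall>i\<in>?I. c i \<in> K \<and> (c i, b i) \<in> Tset G1 G2 \<and> c i \<otimes>\<^bsub>G1\<^esub> b i = a"
      unfolding K_def by blast
    have cG: "i \<in> ?I \<Longrightarrow> c i \<in> ?G" for i using cc KG by blast
    have ca: "i \<in> ?I \<Longrightarrow> c i \<otimes>\<^bsub>G1\<^esub> b i = a" for i using cc by blast
    have T: "i \<in> ?I \<Longrightarrow> c i \<otimes>\<^bsub>G1\<^esub> b i \<noteq> c i \<otimes>\<^bsub>G2\<^esub> b i" for i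
    proof -
      assume i: "i \<in> ?I"
      hence "(c i, b i) \<in> Tset G1 G2" using cc by blast
      thus ?thesis unfolding Tset_def diffset_def by blast
    qed
    show ?thesis
    proof (rule that[of c])
      show "\<forall>i\<in>?I. c i \<in> K \<and> c i \<noteq> a"
      proof
        fix i assume i: "i \<in> ?I"
        have "c i \<otimes>\<^bsub>G1\<^esub> b i \<noteq> c i"
          using group.l_cancel_one[OF g1 cG[OF i] bG[OF i]] bne1[OF i] by blast
        thus "c i \<in> K \<and> c i \<noteq> a" using ca[OF i] cc i by metis
      qed
      show "inj_on c ?I"
      proof (rule inj_onI)
        fix i j assume ij: "i \<in> ?I" "j \<in> ?I" "c i = c j"
        hence "c i \<otimes>\<^bsub>G1\<^esub> b i = c i \<otimes>\<^bsub>G1\<^esub> b j" using ca[OF ij(1)] ca[OF ij(2)] by simp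
        hence "b i = b j" using grp_lcancel[OF g1 cG[OF ij(1)] bG[OF ij(1)] bG[OF ij(2)]] by blast
        thus "i = j" using inj_onD[OF binj _ ij(1,2)] by blast
      qed
      show "\<forall>i\<in>?I. n \<le> d a + d (c i) + d (b i)"
      proof
        fix i assume i: "i \<in> ?I"
        have "n \<le> d (c i) + d (b i) + d (c i \<otimes>\<^bsub>G1\<^esub> b i)"
          unfolding n_def d_def using key3[OF g1 g2 ceq fin cG[OF i] bG[OF i]] T[OF i] by blast
        thus "n \<le> d a + d (c i) + d (b i)" using ca[OF i] by simp
      qed
      have "d (c 1) > 0" using dpos[OF cG[OF l1] bG[OF l1]] T[OF l1] by blast
      thus "\<exists>z\<in>K. d z > 0" using cc l1 by blast
    qed
  qed
  have mq: "m < q"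
  proof -
    obtain z where "z \<in> K" "d z > 0" using zex by blast
    thus ?thesis using mle[of z] inK[of z] KG by auto
  qed
  have wa: "w a \<le> int q - 1 - int m"
    using mq inK[of a] aK by (auto simp: w_def K_def)
  define S where "S = insert a (c' ` ?I \<union> b ` ?I)"
  have SG: "S \<subseteq> ?G" using aK KG c'K bG by (auto simp: S_def K_def)
  have "(\<Sum>x\<in>S. w x) \<le> (\<Sum>x\<in>?G. w x)"
    using fin SG wnn by (intro sum_mono2) auto
  moreover have "(\<Sum>x\<in>S. w x) = w a + ((\<Sum>i\<in>?I. w (c' i)) + (\<Sum>i\<in>?I. w (b i)))"
  proof -
    have "a \<notin> c' ` ?I \<union> b ` ?I" using c'K bK aK by (auto simp: K_def)
    hence "(\<Sum>x\<in>S. w x) = w a + (\<Sum>x\<in>c' ` ?I \<union> b ` ?I. w x)" by (simp add: S_def)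
    also have "(\<Sum>x\<in>c' ` ?I \<union> b ` ?I. w x) = (\<Sum>x\<in>c' ` ?I. w x) + (\<Sum>x\<in>b ` ?I. w x)"
      using c'K bK by (intro sum.union_disjoint) auto
    also have "(\<Sum>x\<in>c' ` ?I. w x) = (\<Sum>i\<in>?I. w (c' i))" using c'inj by (simp add: sum.reindex)
    also have "(\<Sum>x\<in>b ` ?I. w x) = (\<Sum>i\<in>?I. w (b i))" using binj by (simp add: sum.reindex)
    finally show ?thesis .
  qed
  moreover have "(\<Sum>i\<in>?I. w (c' i)) + (\<Sum>i\<in>?I. w (b i)) \<ge> (\<Sum>i\<in>?I. int n - int q - 2 * int m - w a)"
  proof -
    have "(\<Sum>i\<in>?I. int n - int q - 2 * int m - w a) \<le> (\<Sum>i\<in>?I. w (c' i) + w (b i))"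
    proof (rule sum_mono)
      fix i assume i: "i \<in> ?I"
      have wb: "w (b i) = int (d (b i)) - int q" using bK[OF i] HK by (auto simp: w_def)
      have "int n \<le> int (d a) + int (d (c' i)) + int (d (b i))" using c'key i by fastforce
      thus "int n - int q - 2 * int m - w a \<le> w (c' i) + w (b i)"
        using wb wK[of a] wK[of "c' i"] aK c'K i by (auto simp: K_def)
    qed
    thus ?thesis by (simp add: sum.distrib)
  qed
  ultimately have P: "(\<Sum>x\<in>?G. w x) \<ge> w a + int l * (int n - int q - 2 * int m - w a)" by simp
  have "(int l - 1) * w a \<le> (int l - 1) * (int q - 1 - int m)"
    using wa lge by (intro mult_left_mono) auto
  hence "(\<Sum>x\<in>?G. w x) \<ge> int l * (int n - 2 * int q - int m + 1) + int q - int m - 1"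
    using P by (simp add: algebra_simps)
  thus ?thesis using profit_eq by (simp add: n_def q_def m_def)
qed

end
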